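(* Let $\alpha_1,\ldots,\alpha_N,\beta_1,\ldots,\beta_N>0$ and let $\langle A\rangle$ be the $N\times N$ matrix with entries $\langle A_{ij}\rangle=\dfrac{\alpha_i\beta_j}{1+\alpha_i\beta_j}$. (1) If $0<\alpha_i\beta_j<1$ for all $i,j\in\{1,\ldots,N\}$, then $\langle A\rangle=\sum_{k=1}^\infty L_k$ (a convergent series), where each $L_k$ is a rank-one $N\times N$ matrix whose only nonzero singular value is \[\ell_k=\sqrt{\sum_{i,j=1}^N(\alpha_i\beta_j)^{2k}}.\] (2) If $\alpha_i\beta_j>1$ for all $i,j\in\{1,\ldots,N\}$, then $\langle A\rangle=N\,\hat{\bm 1}\hat{\bm 1}^\top+\sum_{k=1}^\infty M_k$ (a convergent series), where $\hat{\bm 1}=(1,\ldots,1)^\top/\sqrt N$ and each $M_k$ is a rank-one $N\times N$ matrix whose only nonzero singular value is \[m_k=\sqrt{\sum_{i,j=1}^N(\alpha_i\beta_j)^{-2k}}.\]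
   Context: $\langle A\rangle$ is the expected adjacency matrix of the directed soft configuration model; no further structure is needed beyond the displayed entry formula. *)

theory Defs
  imports "HOL-Analysis.Analysis"
begin

definition expA :: "('n::finite \<Rightarrow> real) \<Rightarrow> ('n \<Rightarrow> real) \<Rightarrow> real^'n^'n" where
  "expA \<alpha> \<beta> = (\<chi> i j. \<alpha> i * \<beta> j / (1 + \<alpha> i * \<beta> j))"

definition singular_value :: "real^'n::finite^'m::finite \<Rightarrow> real \<Rightarrow> bool" where
  "singular_value A \<sigma> \<longleftrightarrow> \<sigma> \<ge> 0 \<and>
     (\<exists>v. v \<noteq> 0 \<and> (transpose A ** A) *v v = (\<sigma>^2) *\<^sub>R v)"

definition onehat :: "real^'n::finite" where
  "onehat = (\<chi> i. 1 / sqrt (real CARD('n)))"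

definition outer :: "real^'n::finite \<Rightarrow> real^'m::finite \<Rightarrow> real^'m^'n" where
  "outer u v = (\<chi> i j. u $ i * v $ j)"

end

theory Submission
  imports Defs
begin

lemma sums_mat:
  fixes f :: "nat \<Rightarrow> real^'n::finite^'m::finite"
  assumes "\<And>i j. (\<lambda>k. f k $ i $ j) sums (l $ i $ j)"
  shows "f sums l"
  using assms unfolding sums_def
  by (intro vec_tendstoI) (simp add: sum_component)

lemma outer_AtA:
  fixes u v w :: "real^'n::finite"
  shows "(transpose (outer u v) ** outer u v) *v w = ((u \<bullet> u) * (v \<bullet> w)) *\<^sub>R v"
  by (simp add: vec_eq_iff matrix_matrix_mult_def matrix_vector_mult_def transpose_def outer_def
      inner_vec_def sum_distrib_left sum_distrib_right mult_ac)

lemma outer_sv: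
  fixes u v :: "real^'n::finite"
  assumes "u \<noteq> 0" "v \<noteq> 0"
  shows "{s. singular_value (outer u v) s \<and> s \<noteq> 0} = {norm u * norm v}"
proof (intro set_eqI iffI)
  fix s assume "s \<in> {s. singular_value (outer u v) s \<and> s \<noteq> 0}"
  then obtain w where s: "s \<ge> 0" "s \<noteq> 0" "w \<noteq> 0"
     and e: "((u \<bullet> u) * (v \<bullet> w)) *\<^sub>R v = s^2 *\<^sub>R w"
    by (auto simp: singular_value_def outer_AtA)
  have vw: "v \<bullet> w \<noteq> 0"
  proof
    assume "v \<bullet> w = 0"
    then have "s^2 *\<^sub>R w = 0" using e by simp
    then show False using s by simp
  qed
  have "v \<bullet> (((u \<bullet> u) * (v \<bullet> w)) *\<^sub>R v) = v \<bullet> (s^2 *\<^sub>R w)" using e by simp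
  then have "(u \<bullet> u) * (v \<bullet> v) * (v \<bullet> w) = s^2 * (v \<bullet> w)" by (simp add: mult_ac)
  then have "(u \<bullet> u) * (v \<bullet> v) = s^2" using vw by simp
  then have "(norm u * norm v)^2 = s^2"
    by (simp add: power_mult_distrib power2_norm_eq_inner)
  then show "s \<in> {norm u * norm v}" using s
    by (simp add: power2_eq_iff_nonneg)
next
  fix s assume "s \<in> {norm u * norm v}"
  then have s: "s = norm u * norm v" by simp
  have "(transpose (outer u v) ** outer u v) *v v = (s^2) *\<^sub>R v"
    by (simp add: outer_AtA s power_mult_distrib power2_norm_eq_inner mult_ac)
  then show "s \<in> {s. singular_value (outer u v) s \<and> s \<noteq> 0}"
    using assms by (auto simp: singular_value_def s intro!: exI[of _ v])
qed

lemma outer_rank: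
  fixes u v :: "real^'n::finite"
  assumes "u \<noteq> 0" "v \<noteq> 0"
  shows "rank (outer u v) = 1"
proof -
  have "rows (outer u v) \<subseteq> span {v}"
    by (auto simp: rows_def row_def outer_def span_singleton vec_eq_iff)
  then have "rank (outer u v) \<le> 1"
    unfolding row_rank_def by (metis dim_subset dim_span dim_singleton assms(2))
  moreover have "outer u v \<noteq> 0"
  proof
    assume h: "outer u v = 0"
    obtain i where "u $ i \<noteq> 0" using assms(1) by (auto simp: vec_eq_iff)
    moreover obtain j where "v $ j \<noteq> 0" using assms(2) by (auto simp: vec_eq_iff)
    ultimately show False using arg_cong[OF h, of "\<lambda>A. A $ i $ j"] by (simp add: outer_def)
  qed
  ultimately show ?thesis using rank_eq_0 by (metis le_neq_implies_less less_one)
qed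


lemma norm_powvec:
  fixes a :: "'n::finite \<Rightarrow> real"
  shows "norm (\<chi> i. a i ^ k) = sqrt (\<Sum>i\<in>UNIV. a i ^ (2*k))"
  by (simp add: norm_vec_def L2_set_def flip: power_mult) (simp only: mult.commute)

lemma sv_prod:
  fixes a b :: "'n::finite \<Rightarrow> real"
  shows "norm (\<chi> i. a i ^ k) * norm (\<chi> i. b i ^ k) = sqrt (\<Sum>i\<in>UNIV. \<Sum>j\<in>UNIV. (a i * b j) ^ (2*k))"
  by (simp add: norm_powvec real_sqrt_mult[symmetric] sum_product power_mult_distrib)

lemma powvec_nz:
  fixes a :: "'n::finite \<Rightarrow> real"
  assumes "\<And>i. a i > 0"
  shows "(\<chi> i. a i ^ k) \<noteq> 0"
proof
  assume "(\<chi> i. a i ^ k) = 0"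
  then have "a undefined ^ k = 0" by (metis vec_lambda_beta zero_index)
  then show False using assms[of undefined] by simp
qed

lemma part_sum:
  fixes x :: real
  assumes "\<bar>x\<bar> < 1"
  shows "(\<lambda>k. x * (-x)^k) sums (x / (1 + x))"
proof -
  have "norm (-x) < 1" using assms by simp
  from sums_mult[OF geometric_sums[OF this], of x] show ?thesis by (simp add: divide_simps)
qed

theorem lemmaS30:
  fixes \<alpha> \<beta> :: "'n::finite \<Rightarrow> real"
  assumes "\<And>i. \<alpha> i > 0" and "\<And>j. \<beta> j > 0"
  shows "((\<forall>i j. 0 < \<alpha> i * \<beta> j \<and> \<alpha> i * \<beta> j < 1) \<longrightarrow>
           (\<exists>L :: nat \<Rightarrow> real^'n^'n.
              (\<forall>k\<ge>1. rank (L k) = 1 \<and>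
                 {s. singular_value (L k) s \<and> s \<noteq> 0} =
                 {sqrt (\<Sum>i\<in>UNIV. \<Sum>j\<in>UNIV. (\<alpha> i * \<beta> j) ^ (2*k))}) \<and>
              (\<lambda>k. L (Suc k)) sums expA \<alpha> \<beta>))
       \<and> ((\<forall>i j. \<alpha> i * \<beta> j > 1) \<longrightarrow>
           (\<exists>M :: nat \<Rightarrow> real^'n^'n.
              (\<forall>k\<ge>1. rank (M k) = 1 \<and>
                 {s. singular_value (M k) s \<and> s \<noteq> 0} =
                 {sqrt (\<Sum>i\<in>UNIV. \<Sum>j\<in>UNIV. (\<alpha> i * \<beta> j) powi (- 2 * int k))}) \<and>
              (\<lambda>k. M (Suc k)) sums
                 (expA \<alpha> \<beta> - real CARD('n) *\<^sub>R outer onehat onehat)))"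
proof (intro conjI impI)
  assume h: "\<forall>i j. 0 < \<alpha> i * \<beta> j \<and> \<alpha> i * \<beta> j < 1"
  define L :: "nat \<Rightarrow> real^'n^'n" where
    "L k = outer ((-1)^(k+1) *\<^sub>R (\<chi> i. \<alpha> i ^ k)) (\<chi> j. \<beta> j ^ k)" for k
  show "\<exists>L :: nat \<Rightarrow> real^'n^'n.
              (\<forall>k\<ge>1. rank (L k) = 1 \<and>
                 {s. singular_value (L k) s \<and> s \<noteq> 0} =
                 {sqrt (\<Sum>i\<in>UNIV. \<Sum>j\<in>UNIV. (\<alpha> i * \<beta> j) ^ (2*k))}) \<and>
              (\<lambda>k. L (Suc k)) sums expA \<alpha> \<beta>"
  proof (intro exI[of _ L] conjI allI impI)
    fix k :: nat
    have nz: "(-1)^(k+1) *\<^sub>R (\<chi> i. \<alpha> i ^ k) \<noteq> 0" "(\<chi> j. \<beta> j ^ k) \<noteq> 0"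
      using powvec_nz[of \<alpha> k] powvec_nz[of \<beta> k] assms by auto
    show "rank (L k) = 1" unfolding L_def by (rule outer_rank[OF nz])
    show "{s. singular_value (L k) s \<and> s \<noteq> 0} =
                 {sqrt (\<Sum>i\<in>UNIV. \<Sum>j\<in>UNIV. (\<alpha> i * \<beta> j) ^ (2*k))}"
      unfolding L_def outer_sv[OF nz] by (simp add: sv_prod)
  next
    show "(\<lambda>k. L (Suc k)) sums expA \<alpha> \<beta>"
    proof (rule sums_mat)
      fix i j
      have "0 < \<alpha> i * \<beta> j" "\<alpha> i * \<beta> j < 1" using h by auto
      then have ab: "\<bar>\<alpha> i * \<beta> j\<bar> < 1" by simp
      have eq: "L (Suc k) $ i $ j = \<alpha> i * \<beta> j * (- (\<alpha> i * \<beta> j)) ^ k" for k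
        by (simp add: L_def outer_def power_minus[of "\<alpha> i * \<beta> j"] power_mult_distrib)
      from part_sum[OF ab] show "(\<lambda>k. L (Suc k) $ i $ j) sums (expA \<alpha> \<beta> $ i $ j)"
        by (simp add: eq expA_def)
    qed
  qed
next
  assume h: "\<forall>i j. \<alpha> i * \<beta> j > 1"
  define M :: "nat \<Rightarrow> real^'n^'n" where
    "M k = outer ((-1)^k *\<^sub>R (\<chi> i. inverse (\<alpha> i) ^ k)) (\<chi> j. inverse (\<beta> j) ^ k)" for k
  show "\<exists>M :: nat \<Rightarrow> real^'n^'n.
              (\<forall>k\<ge>1. rank (M k) = 1 \<and>
                 {s. singular_value (M k) s \<and> s \<noteq> 0} =
                 {sqrt (\<Sum>i\<in>UNIV. \<Sum>j\<in>UNIV. (\<alpha> i * \<beta> j) powi (- 2 * int k))}) \<and>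
              (\<lambda>k. M (Suc k)) sums
                 (expA \<alpha> \<beta> - real CARD('n) *\<^sub>R outer onehat onehat)"
  proof (intro exI[of _ M] conjI allI impI)
    fix k :: nat
    have nz: "(-1)^k *\<^sub>R (\<chi> i. inverse (\<alpha> i) ^ k) \<noteq> 0" "(\<chi> j. inverse (\<beta> j) ^ k) \<noteq> 0"
      using powvec_nz[of "\<lambda>i. inverse (\<alpha> i)" k] powvec_nz[of "\<lambda>i. inverse (\<beta> i)" k] assms by auto
    show "rank (M k) = 1" unfolding M_def by (rule outer_rank[OF nz])
    have pw: "(\<alpha> i * \<beta> j) powi (- 2 * int k) = (inverse (\<alpha> i) * inverse (\<beta> j)) ^ (2*k)" for i j
    proof -
      have "- 2 * int k = - int (2*k)" by simp
      then show ?thesis by (simp only: power_int_minus power_int_of_nat) (simp add: power_mult_distrib power_inverse)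
    qed
    show "{s. singular_value (M k) s \<and> s \<noteq> 0} =
                 {sqrt (\<Sum>i\<in>UNIV. \<Sum>j\<in>UNIV. (\<alpha> i * \<beta> j) powi (- 2 * int k))}"
      unfolding M_def outer_sv[OF nz] pw by (simp add: sv_prod)
  next
    show "(\<lambda>k. M (Suc k)) sums (expA \<alpha> \<beta> - real CARD('n) *\<^sub>R outer onehat onehat)"
    proof (rule sums_mat)
      fix i j
      define y where "y = inverse (\<alpha> i * \<beta> j)"
      have x1: "\<alpha> i * \<beta> j > 1" using h by auto
      then have "\<bar>y\<bar> < 1" unfolding y_def
        by (metis abs_inverse abs_of_pos inverse_less_1_iff less_trans zero_less_one)
      from sums_minus[OF part_sum[OF this]]
      have "(\<lambda>k. - (y * (- y) ^ k)) sums (- (y / (1 + y)))" .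
      moreover have "- (y / (1 + y)) = expA \<alpha> \<beta> $ i $ j - 1"
        using x1 assms[of i] assms(2)[of j] unfolding y_def expA_def by (simp add: field_simps)
      moreover have "real CARD('n) *\<^sub>R outer onehat onehat $ i $ j = (1::real)"
        by (simp add: outer_def onehat_def field_simps)
      moreover have "M (Suc k) $ i $ j = - (y * (- y) ^ k)" for k
        by (simp add: M_def outer_def y_def power_minus[of "inverse (\<alpha> i) * inverse (\<beta> j)"] power_mult_distrib inverse_mult_distrib)
      ultimately show "(\<lambda>k. M (Suc k) $ i $ j) sums ((expA \<alpha> \<beta> - real CARD('n) *\<^sub>R outer onehat onehat) $ i $ j)"
        by simp
    qed
  qed
qed

end
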